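(* Let $\alpha\in(1,3)$, $n=2$ and $\mu>0$, and consider the planar Maxwell-ring potential described in the context, in polar coordinates $u=re^{i\varphi}$. Then its critical points are exactly the $\mathbb{Z}_2$-orbits (orbits under $u\mapsto -u$) of: two saddle points $u=r_2$ and $u=r_1$ with $0<r_2<1<r_1$, and one minimum point $u=r_3e^{i\pi/2}$ with $r_3>1$; there are no other critical points.
   Context: Let $\zeta=\pi$, $\phi_\alpha'(r)=-r^{-\alpha}$, $s=2^{-\alpha}$ (i.e. $s=2^{-\alpha}\sum_{j=1}^{n-1}\sin^{-(\alpha-1)}(j\zeta/2)$ with $n=2$). The (rescaled) planar potential of a satellite attracted by two unit masses at $\pm1$ and a central mass $\mu$ at $0$ (identifying $\mathbb{R}^2=\mathbb{C}$) is $$V(u)=\frac12\|u\|^2+\sum_{j=1}^2\frac1{s+\mu}\phi_\alpha(\|u-e^{ij\pi}\|)+\frac{\mu}{s+\mu}\phi_\alpha(\|u\|).$$ *)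

theory Defs
  imports "HOL-Analysis.Analysis"
begin

text \<open>A primitive of phi' r = - r^(-alpha) (alpha > 1); additive constants are irrelevant.\<close>
definition phi :: "real \<Rightarrow> real \<Rightarrow> real" where
  "phi \<alpha> r = r powr (1 - \<alpha>) / (\<alpha> - 1)"

text \<open>s = 2^(-alpha) * sum_{j=1}^{n-1} sin^(-(alpha-1))(j zeta/2) with n = 2, zeta = pi.\<close>
definition sMax :: "real \<Rightarrow> real" where
  "sMax \<alpha> = 2 powr (-\<alpha>)"

definition V :: "real \<Rightarrow> real \<Rightarrow> complex \<Rightarrow> real" where
  "V \<alpha> \<mu> u = (norm u)\<^sup>2 / 2
     + (\<Sum>j\<in>{1::nat, 2}. phi \<alpha> (norm (u - cis (real j * pi))) / (sMax \<alpha> + \<mu>))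
     + \<mu> / (sMax \<alpha> + \<mu>) * phi \<alpha> (norm u)"

definition critical_point :: "(complex \<Rightarrow> real) \<Rightarrow> complex \<Rightarrow> bool" where
  "critical_point f u \<longleftrightarrow> u \<notin> {0, 1, -1} \<and> (f has_derivative (\<lambda>h. 0)) (at u)"

definition local_min_pt :: "(complex \<Rightarrow> real) \<Rightarrow> complex \<Rightarrow> bool" where
  "local_min_pt f u \<longleftrightarrow> (\<exists>e>0. \<forall>v\<in>ball u e. f u \<le> f v)"

definition local_max_pt :: "(complex \<Rightarrow> real) \<Rightarrow> complex \<Rightarrow> bool" where
  "local_max_pt f u \<longleftrightarrow> (\<exists>e>0. \<forall>v\<in>ball u e. f v \<le> f u)"

definition saddle_pt :: "(complex \<Rightarrow> real) \<Rightarrow> complex \<Rightarrow> bool" where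
  "saddle_pt f u \<longleftrightarrow> critical_point f u \<and> \<not> local_min_pt f u \<and> \<not> local_max_pt f u"

definition minimum_pt :: "(complex \<Rightarrow> real) \<Rightarrow> complex \<Rightarrow> bool" where
  "minimum_pt f u \<longleftrightarrow> critical_point f u \<and> local_min_pt f u"

end

theory Submission
  imports Defs
begin

definition E :: "real \<Rightarrow> complex \<Rightarrow> real" where "E \<alpha> w = norm w powr (- \<alpha> - 1)"

lemma powr_plus1: "0 < (x::real) \<Longrightarrow> x powr (a + 1) = x powr a * x"
  by (simp add: powr_add)

lemma powr_plus1': "0 < (x::real) \<Longrightarrow> b = a + 1 \<Longrightarrow> x powr b = x powr a * x"
  by (simp add: powr_add)

lemma phi_norm_deriv:
  assumes "1 < \<alpha>" "w0 \<noteq> a"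
  shows "((\<lambda>w. phi \<alpha> (norm (w - a))) has_derivative (\<lambda>h. - (E \<alpha> (w0 - a) * ((w0 - a) \<bullet> h)))) (at w0)"
proof -
  have n: "((\<lambda>w. norm (w - a)) has_derivative (\<lambda>h. h \<bullet> sgn (w0 - a))) (at w0)"
    using has_derivative_compose[OF has_derivative_diff[OF has_derivative_ident has_derivative_const] has_derivative_norm[of "w0 - a"]] assms
    by simp
  have "((\<lambda>w. phi \<alpha> (norm (w - a))) has_derivative
     (\<lambda>h. norm (w0 - a) powr (1 - \<alpha>) * ((h \<bullet> sgn (w0 - a)) * (1 - \<alpha>) / norm (w0 - a)) / (\<alpha> - 1))) (at w0)"
    unfolding phi_def
    by (rule derivative_eq_intros n refl | use assms in simp)+
  moreover have "norm (w0 - a) powr (1 - \<alpha>) * ((h \<bullet> sgn (w0 - a)) * (1 - \<alpha>) / norm (w0 - a)) / (\<alpha> - 1)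
      = - (E \<alpha> (w0 - a) * ((w0 - a) \<bullet> h))" for h
  proof -
    have p: "norm (w0 - a) > 0" using assms by simp
    have "norm (w0 - a) powr (1 - \<alpha>) = norm (w0 - a) powr (- \<alpha> - 1) * norm (w0 - a) ^ 2"
      using p powr_plus1'[of "norm (w0 - a)" "1 - \<alpha>" "-\<alpha>"] powr_plus1'[of "norm (w0 - a)" "- \<alpha>" "-\<alpha> - 1"]
      by (simp add: power2_eq_square)
    moreover have "h \<bullet> sgn (w0 - a) = ((w0 - a) \<bullet> h) / norm (w0 - a)"
      unfolding sgn_div_norm by (simp add: inner_commute[of h] divide_inverse del: scaleR_right_diff_distrib)
    moreover have "\<And>n s q P P1 :: real. n > 0 \<Longrightarrow> \<alpha> > 1 \<Longrightarrow> P1 = P * n\<^sup>2 \<Longrightarrow> s = q / n \<Longrightarrow>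
       P1 * (s * (1 - \<alpha>) / n) / (\<alpha> - 1) = - (P * q)"
      by (simp only:) (simp add: field_simps power2_eq_square)
    ultimately show ?thesis using p assms unfolding E_def by blast
  qed
  ultimately show ?thesis by simp
qed
definition cc :: "real \<Rightarrow> real \<Rightarrow> real" where "cc \<alpha> \<mu> = 1 / (sMax \<alpha> + \<mu>)"

definition G :: "real \<Rightarrow> real \<Rightarrow> complex \<Rightarrow> complex" where
  "G \<alpha> \<mu> u = u - (cc \<alpha> \<mu> * E \<alpha> (u - 1)) *\<^sub>R (u - 1) - (cc \<alpha> \<mu> * E \<alpha> (u + 1)) *\<^sub>R (u + 1)
      - (\<mu> * cc \<alpha> \<mu> * E \<alpha> u) *\<^sub>R u"

lemma V_alt: "V \<alpha> \<mu> u = (u \<bullet> u) / 2 + cc \<alpha> \<mu> * phi \<alpha> (norm (u - (-1))) + cc \<alpha> \<mu> * phi \<alpha> (norm (u - 1))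
   + \<mu> * cc \<alpha> \<mu> * phi \<alpha> (norm (u - 0))"
proof -
  have "cis (2 * pi) = 1" by (simp add: cis.ctr complex_eq_iff)
  then show ?thesis
    by (simp add: V_def cc_def power2_norm_eq_inner add_divide_distrib)
qed

lemma V_deriv:
  assumes "1 < \<alpha>" "u \<notin> {0, 1, -1}"
  shows "(V \<alpha> \<mu> has_derivative (\<lambda>h. G \<alpha> \<mu> u \<bullet> h)) (at u)"
proof -
  have d1: "((\<lambda>w. phi \<alpha> (norm (w - a))) has_derivative (\<lambda>h. - (E \<alpha> (u - a) * ((u - a) \<bullet> h)))) (at u)"
    if "a \<in> {0, 1, -1}" for a
    using phi_norm_deriv[OF assms(1), of u a] assms that by auto
  have di: "((\<lambda>x. x \<bullet> x) has_derivative (\<lambda>h. u \<bullet> h + h \<bullet> u)) (at u)"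
    by (rule has_derivative_inner[OF has_derivative_ident has_derivative_ident])
  have d0: "((\<lambda>x. x \<bullet> x / 2) has_derivative (\<lambda>h. (u \<bullet> h + h \<bullet> u) / 2)) (at u)"
    using has_derivative_divide[OF di has_derivative_const[of "2::real"]] by simp
  have "((\<lambda>u. (u \<bullet> u) / 2 + cc \<alpha> \<mu> * phi \<alpha> (norm (u - (-1))) + cc \<alpha> \<mu> * phi \<alpha> (norm (u - 1))
   + \<mu> * cc \<alpha> \<mu> * phi \<alpha> (norm (u - 0))) has_derivative
     (\<lambda>h. (u \<bullet> h + h \<bullet> u) / 2 + cc \<alpha> \<mu> * - (E \<alpha> (u - (-1)) * ((u - (-1)) \<bullet> h))
       + cc \<alpha> \<mu> * - (E \<alpha> (u - 1) * ((u - 1) \<bullet> h)) + \<mu> * cc \<alpha> \<mu> * - (E \<alpha> (u - 0) * ((u - 0) \<bullet> h)))) (at u)"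
    using d0 by (intro derivative_intros d1) auto
  moreover have "(\<lambda>h. (u \<bullet> h + h \<bullet> u) / 2 + cc \<alpha> \<mu> * - (E \<alpha> (u - (-1)) * ((u - (-1)) \<bullet> h))
       + cc \<alpha> \<mu> * - (E \<alpha> (u - 1) * ((u - 1) \<bullet> h)) + \<mu> * cc \<alpha> \<mu> * - (E \<alpha> (u - 0) * ((u - 0) \<bullet> h)))
     = (\<lambda>h. G \<alpha> \<mu> u \<bullet> h)"
    apply (rule ext)
    apply (simp add: G_def inner_diff_left inner_add_left inner_commute[of h] algebra_simps)
    by (simp add: inner_commute)
  ultimately show ?thesis unfolding V_alt[abs_def] by simp
qed


lemma sMax_pos: "sMax \<alpha> > 0" by (simp add: sMax_def)

lemma cc_pos: "0 < \<mu> \<Longrightarrow> cc \<alpha> \<mu> > 0"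
  using sMax_pos[of \<alpha>] by (simp add: cc_def)

lemma critical_iff:
  assumes "1 < \<alpha>"
  shows "critical_point (V \<alpha> \<mu>) u \<longleftrightarrow> u \<notin> {0, 1, -1} \<and> G \<alpha> \<mu> u = 0"
proof
  assume c: "critical_point (V \<alpha> \<mu>) u"
  then have u: "u \<notin> {0, 1, -1}" and d: "(V \<alpha> \<mu> has_derivative (\<lambda>h. 0)) (at u)"
    by (auto simp: critical_point_def)
  have "(\<lambda>h. G \<alpha> \<mu> u \<bullet> h) = (\<lambda>h. 0)"
    using has_derivative_unique[OF V_deriv[OF assms u] d] .
  then have "G \<alpha> \<mu> u \<bullet> G \<alpha> \<mu> u = 0" by (rule fun_cong)
  then show "u \<notin> {0, 1, -1} \<and> G \<alpha> \<mu> u = 0" using u by simp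
next
  assume "u \<notin> {0, 1, -1} \<and> G \<alpha> \<mu> u = 0"
  then show "critical_point (V \<alpha> \<mu>) u"
    using V_deriv[OF assms, of u \<mu>] by (simp add: critical_point_def)
qed

lemma V_neg: "V \<alpha> \<mu> (- u) = V \<alpha> \<mu> u"
proof -
  have e1: "- u - 1 = - (u + 1)" "- u + 1 = - (u - 1)" by simp_all
  have "norm (- u - 1) = norm (u + 1)" unfolding e1 by (rule norm_minus_cancel)
  moreover have "norm (- u + 1) = norm (u - 1)" unfolding e1 by (rule norm_minus_cancel)
  ultimately show ?thesis by (simp add: V_alt add_ac)
qed

lemma E_neg: "E \<alpha> (- w) = E \<alpha> w" by (simp add: E_def)

lemma G_neg: "G \<alpha> \<mu> (- u) = - G \<alpha> \<mu> u"
proof -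
  have e1: "- u - 1 = - (u + 1)" "- u + 1 = - (u - 1)" by simp_all
  show ?thesis unfolding G_def e1 E_neg by (simp add: scaleR_right_diff_distrib scaleR_right_distrib)
qed

lemma Re_G: "Re (G \<alpha> \<mu> u) = Re u - cc \<alpha> \<mu> * E \<alpha> (u - 1) * (Re u - 1) - cc \<alpha> \<mu> * E \<alpha> (u + 1) * (Re u + 1)
   - \<mu> * cc \<alpha> \<mu> * E \<alpha> u * Re u"
  by (simp add: G_def)

lemma Im_G: "Im (G \<alpha> \<mu> u) = Im u - cc \<alpha> \<mu> * E \<alpha> (u - 1) * Im u - cc \<alpha> \<mu> * E \<alpha> (u + 1) * Im u
   - \<mu> * cc \<alpha> \<mu> * E \<alpha> u * Im u"
  by (simp add: G_def)

lemma powr_inj_base: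
  assumes h: "0 < (a::real)" "0 < b" "p \<noteq> 0" "a powr p = b powr p"
  shows "a = b"
proof -
  have "a = (a powr p) powr (1 / p)" using h(1,3) by (simp add: powr_powr)
  also have "\<dots> = (b powr p) powr (1 / p)" using h by simp
  also have "\<dots> = b" using h(2,3) by (simp add: powr_powr)
  finally show ?thesis .
qed

lemma offaxis:
  assumes "1 < \<alpha>" "0 < \<mu>" "u \<notin> {0, 1, -1}" "Im u \<noteq> 0" "G \<alpha> \<mu> u = 0"
  shows "Re u = 0"
proof -
  define c where "c = cc \<alpha> \<mu>"
  define E1 where "E1 = E \<alpha> (u - 1)"
  define E2 where "E2 = E \<alpha> (u + 1)"
  define E0 where "E0 = E \<alpha> u"
  define x where "x = Re u"
  define y where "y = Im u"
  have "Im (G \<alpha> \<mu> u) = 0" "Re (G \<alpha> \<mu> u) = 0" using assms by simp_all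
  then have i: "y - c * E1 * y - c * E2 * y - \<mu> * c * E0 * y = 0"
    and r: "x - c * E1 * (x - 1) - c * E2 * (x + 1) - \<mu> * c * E0 * x = 0"
    unfolding Re_G Im_G c_def E1_def E2_def E0_def x_def y_def by simp_all
  have "y * (1 - c * E1 - c * E2 - \<mu> * c * E0) = 0" using i by (simp add: algebra_simps)
  then have i': "1 - c * E1 - c * E2 - \<mu> * c * E0 = 0" using assms(4) y_def by simp
  have "c * (E1 - E2) = (x - c * E1 * (x - 1) - c * E2 * (x + 1) - \<mu> * c * E0 * x)
     - x * (1 - c * E1 - c * E2 - \<mu> * c * E0)"
    by (simp add: algebra_simps)
  also have "\<dots> = 0" using r i' by simp
  finally have "c * (E1 - E2) = 0" .
  then have E12: "E \<alpha> (u - 1) = E \<alpha> (u + 1)" using cc_pos[OF assms(2), of \<alpha>] c_def E1_def E2_def by simp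
  have "norm (u - 1) = norm (u + 1)"
  proof (rule powr_inj_base)
    show "0 < norm (u - 1)" using assms(3) by auto
    have "u + 1 \<noteq> 0"
    proof
      assume "u + 1 = 0"
      then have "u = -1" by (simp add: eq_neg_iff_add_eq_0)
      then show False using assms(3) by simp
    qed
    then show "0 < norm (u + 1)" by simp
    show "- \<alpha> - 1 \<noteq> 0" using assms(1) by simp
  qed (use E12 in \<open>simp add: E_def\<close>)
  then have "(norm (u - 1))\<^sup>2 = (norm (u + 1))\<^sup>2" by simp
  then have "(Re u - 1)\<^sup>2 = (Re u + 1)\<^sup>2" unfolding cmod_power2 by simp
  then show ?thesis by (simp add: power2_sum power2_diff)
qed



definition F :: "real \<Rightarrow> real \<Rightarrow> real \<Rightarrow> real" where
  "F \<alpha> \<mu> x = x - cc \<alpha> \<mu> * \<bar>x - 1\<bar> powr (- \<alpha> - 1) * (x - 1) - cc \<alpha> \<mu> * \<bar>x + 1\<bar> powr (- \<alpha> - 1) * (x + 1)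
     - \<mu> * cc \<alpha> \<mu> * \<bar>x\<bar> powr (- \<alpha> - 1) * x"

lemma Re_G_real: "Re (G \<alpha> \<mu> (complex_of_real x)) = F \<alpha> \<mu> x"
proof -
  have "complex_of_real x - 1 = complex_of_real (x - 1)" "complex_of_real x + 1 = complex_of_real (x + 1)" by simp_all
  then show ?thesis unfolding Re_G F_def E_def by (simp only: norm_of_real) simp
qed

lemma Im_G_real: "Im (G \<alpha> \<mu> (complex_of_real x)) = 0"
  unfolding Im_G by simp

lemma F_neg: "F \<alpha> \<mu> (- x) = - F \<alpha> \<mu> x"
proof -
  have "\<bar>- x - 1\<bar> = \<bar>x + 1\<bar>" "\<bar>- x + 1\<bar> = \<bar>x - 1\<bar>" by linarith+
  then show ?thesis unfolding F_def by (simp add: algebra_simps)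
qed

lemma pw1: "0 < (t::real) \<Longrightarrow> t powr (- \<alpha> - 1) * t = t powr (- \<alpha>)"
  using powr_plus1'[of t "- \<alpha>" "- \<alpha> - 1"] by simp

lemma F_01: "0 < x \<Longrightarrow> x < 1 \<Longrightarrow>
  F \<alpha> \<mu> x = x + cc \<alpha> \<mu> * (1 - x) powr (- \<alpha>) - cc \<alpha> \<mu> * (1 + x) powr (- \<alpha>) - \<mu> * cc \<alpha> \<mu> * x powr (- \<alpha>)"
proof -
  assume h: "0 < x" "x < 1"
  have a: "\<bar>x - 1\<bar> powr (- \<alpha> - 1) * (x - 1) = - ((1 - x) powr (- \<alpha>))"
  proof -
    have "\<bar>x - 1\<bar> = 1 - x" using h by simp
    moreover have "(1 - x) powr (- \<alpha> - 1) * (x - 1) = - ((1 - x) powr (- \<alpha> - 1) * (1 - x))" by (simp add: algebra_simps)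
    ultimately show ?thesis using pw1[of "1 - x" \<alpha>] h by simp
  qed
  have b: "\<bar>x + 1\<bar> powr (- \<alpha> - 1) * (x + 1) = (1 + x) powr (- \<alpha>)"
    using pw1[of "1 + x" \<alpha>] h by (simp add: abs_if add.commute)
  have c: "\<bar>x\<bar> powr (- \<alpha> - 1) * x = x powr (- \<alpha>)"
    using pw1[of x \<alpha>] h by simp
  show ?thesis unfolding F_def
    by (simp only: mult.assoc a b c)
qed

lemma F_1inf: "1 < x \<Longrightarrow>
  F \<alpha> \<mu> x = x - cc \<alpha> \<mu> * (x - 1) powr (- \<alpha>) - cc \<alpha> \<mu> * (x + 1) powr (- \<alpha>) - \<mu> * cc \<alpha> \<mu> * x powr (- \<alpha>)"
proof -
  assume h: "1 < x"
  have a: "\<bar>x - 1\<bar> powr (- \<alpha> - 1) * (x - 1) = (x - 1) powr (- \<alpha>)"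
    using pw1[of "x - 1" \<alpha>] h by simp
  have b: "\<bar>x + 1\<bar> powr (- \<alpha> - 1) * (x + 1) = (x + 1) powr (- \<alpha>)"
    using pw1[of "x + 1" \<alpha>] h by simp
  have c: "\<bar>x\<bar> powr (- \<alpha> - 1) * x = x powr (- \<alpha>)"
    using pw1[of x \<alpha>] h by simp
  show ?thesis unfolding F_def
    by (simp only: mult.assoc a b c)
qed

lemma F_mono_01:
  assumes "0 < \<alpha>" "0 < \<mu>" "0 < a" "a < b" "b < 1"
  shows "F \<alpha> \<mu> a < F \<alpha> \<mu> b"
proof -
  have c: "cc \<alpha> \<mu> > 0" using cc_pos[OF assms(2)] .
  have 1: "(1 - a) powr (- \<alpha>) < (1 - b) powr (- \<alpha>)"
    using assms by (intro powr_less_mono2_neg) auto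
  have 2: "(1 + b) powr (- \<alpha>) < (1 + a) powr (- \<alpha>)"
    using assms by (intro powr_less_mono2_neg) auto
  have 3: "b powr (- \<alpha>) < a powr (- \<alpha>)"
    using assms by (intro powr_less_mono2_neg) auto
  have "cc \<alpha> \<mu> * (1 - a) powr (- \<alpha>) < cc \<alpha> \<mu> * (1 - b) powr (- \<alpha>)" using 1 c by simp
  moreover have "cc \<alpha> \<mu> * (1 + b) powr (- \<alpha>) < cc \<alpha> \<mu> * (1 + a) powr (- \<alpha>)" using 2 c by simp
  moreover have "\<mu> * cc \<alpha> \<mu> * b powr (- \<alpha>) < \<mu> * cc \<alpha> \<mu> * a powr (- \<alpha>)" using 3 c assms by simp
  ultimately show ?thesis using F_01[of a \<alpha> \<mu>] F_01[of b \<alpha> \<mu>] assms by linarith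
qed

lemma F_mono_1inf:
  assumes "0 < \<alpha>" "0 < \<mu>" "1 < a" "a < b"
  shows "F \<alpha> \<mu> a < F \<alpha> \<mu> b"
proof -
  have c: "cc \<alpha> \<mu> > 0" using cc_pos[OF assms(2)] .
  have 1: "(b - 1) powr (- \<alpha>) < (a - 1) powr (- \<alpha>)"
    using assms by (intro powr_less_mono2_neg) auto
  have 2: "(b + 1) powr (- \<alpha>) < (a + 1) powr (- \<alpha>)"
    using assms by (intro powr_less_mono2_neg) auto
  have 3: "b powr (- \<alpha>) < a powr (- \<alpha>)"
    using assms by (intro powr_less_mono2_neg) auto
  have "cc \<alpha> \<mu> * (b - 1) powr (- \<alpha>) < cc \<alpha> \<mu> * (a - 1) powr (- \<alpha>)" using 1 c by simp
  moreover have "cc \<alpha> \<mu> * (b + 1) powr (- \<alpha>) < cc \<alpha> \<mu> * (a + 1) powr (- \<alpha>)" using 2 c by simp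
  moreover have "\<mu> * cc \<alpha> \<mu> * b powr (- \<alpha>) < \<mu> * cc \<alpha> \<mu> * a powr (- \<alpha>)" using 3 c assms by simp
  ultimately show ?thesis using F_1inf[of a \<alpha> \<mu>] F_1inf[of b \<alpha> \<mu>] assms by linarith
qed

lemma powr_neg_big:
  fixes x T \<alpha> :: real
  assumes "0 < x" "0 < T" "0 < \<alpha>" "x \<le> T powr (- 1 / \<alpha>)"
  shows "T \<le> x powr (- \<alpha>)"
proof -
  have "(T powr (- 1 / \<alpha>)) powr (- \<alpha>) \<le> x powr (- \<alpha>)"
    using assms powr_mono2'[where a="- \<alpha>" and x=x and y="T powr (- 1 / \<alpha>)"] by auto
  moreover have "(T powr (- 1 / \<alpha>)) powr (- \<alpha>) = T" using assms by (simp add: powr_powr)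
  ultimately show ?thesis by simp
qed

lemma powr_neg_le1: "1 \<le> (x::real) \<Longrightarrow> a \<le> 0 \<Longrightarrow> x powr a \<le> 1"
  using powr_mono[of a 0 x] by simp


lemma F_cont_01: "0 < a \<Longrightarrow> b < 1 \<Longrightarrow> continuous_on {a..b} (F \<alpha> \<mu>)"
proof -
  assume h: "0 < a" "b < 1"
  have "continuous_on {a..b} (\<lambda>x. x + cc \<alpha> \<mu> * (1 - x) powr (- \<alpha>) - cc \<alpha> \<mu> * (1 + x) powr (- \<alpha>) - \<mu> * cc \<alpha> \<mu> * x powr (- \<alpha>))"
    using h by (intro continuous_intros) auto
  then show ?thesis
    by (rule continuous_on_eq) (use h in \<open>auto simp: F_01\<close>)
qed

lemma F_cont_1inf: "1 < a \<Longrightarrow> continuous_on {a..b} (F \<alpha> \<mu>)"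
proof -
  assume h: "1 < a"
  have "continuous_on {a..b} (\<lambda>x. x - cc \<alpha> \<mu> * (x - 1) powr (- \<alpha>) - cc \<alpha> \<mu> * (x + 1) powr (- \<alpha>) - \<mu> * cc \<alpha> \<mu> * x powr (- \<alpha>))"
    using h by (intro continuous_intros) auto
  then show ?thesis
    by (rule continuous_on_eq) (use h in \<open>auto simp: F_1inf\<close>)
qed

lemma F_root_01:
  assumes "0 < \<alpha>" "0 < \<mu>"
  shows "\<exists>r. 0 < r \<and> r < 1 \<and> F \<alpha> \<mu> r = 0"
proof -
  define c where "c = cc \<alpha> \<mu>"
  have c: "c > 0" using cc_pos[OF assms(2)] c_def by simp
  define K where "K = (1/2::real) powr (- \<alpha>)"
  have K: "K > 0" by (simp add: K_def)
  define T where "T = (1/2 + c * K) / (\<mu> * c) + 1"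
  have T: "T > 0" unfolding T_def using c K assms by (intro add_pos_pos divide_pos_pos mult_pos_pos) auto
  define a where "a = min (1/2) (T powr (- 1 / \<alpha>))"
  have a0: "0 < a" "a \<le> 1/2" using T by (auto simp: a_def)
  have aT: "T \<le> a powr (- \<alpha>)"
    using a0 T assms by (intro powr_neg_big) (auto simp: a_def)
  have a1: "(1 - a) powr (- \<alpha>) \<le> K"
    unfolding K_def using a0 assms by (intro powr_mono2') auto
  have a2: "0 \<le> (1 + a) powr (- \<alpha>)" by simp
  have "\<mu> * c * T = 1/2 + c * K + \<mu> * c" using c assms by (simp add: T_def field_simps)
  moreover have "\<mu> * c * T \<le> \<mu> * c * a powr (- \<alpha>)" using aT c assms by simp
  moreover have "c * (1 - a) powr (- \<alpha>) \<le> c * K" using a1 c by simp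
  moreover have "0 \<le> c * (1 + a) powr (- \<alpha>)" using c by simp
  moreover have "F \<alpha> \<mu> a = a + c * (1 - a) powr (- \<alpha>) - c * (1 + a) powr (- \<alpha>) - \<mu> * c * a powr (- \<alpha>)"
    unfolding c_def using a0 by (intro F_01) auto
  moreover have "0 < \<mu> * c" using c assms by simp
  ultimately have Fa: "F \<alpha> \<mu> a < 0" using a0 c by linarith
  define T' where "T' = \<mu> * K + 2"
  have T': "T' > 0" unfolding T'_def using K assms by (intro add_pos_pos mult_pos_pos) auto
  define b where "b = max (1/2) (1 - T' powr (- 1 / \<alpha>))"
  have b0: "1/2 \<le> b" "b < 1" using T' by (auto simp: b_def)
  have bT: "T' \<le> (1 - b) powr (- \<alpha>)"
    using b0 T' assms by (intro powr_neg_big) (auto simp: b_def)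
  have b1: "b powr (- \<alpha>) \<le> K"
    unfolding K_def using b0 assms by (intro powr_mono2') auto
  have b2: "(1 + b) powr (- \<alpha>) \<le> 1" using b0 assms by (intro powr_neg_le1) auto
  have "c * T' \<le> c * (1 - b) powr (- \<alpha>)" using bT c by simp
  moreover have "\<mu> * c * b powr (- \<alpha>) \<le> \<mu> * c * K" using b1 c assms by simp
  moreover have "c * (1 + b) powr (- \<alpha>) \<le> c" using b2 c by simp
  moreover have "c * T' = \<mu> * c * K + 2 * c" by (simp add: T'_def algebra_simps)
  moreover have "F \<alpha> \<mu> b = b + c * (1 - b) powr (- \<alpha>) - c * (1 + b) powr (- \<alpha>) - \<mu> * c * b powr (- \<alpha>)"
    unfolding c_def using b0 by (intro F_01) auto
  ultimately have Fb: "F \<alpha> \<mu> b > 0" using b0 c by linarith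
  have "a \<le> b" using a0 b0 by simp
  then obtain r where r: "a \<le> r" "r \<le> b" "F \<alpha> \<mu> r = 0"
    using IVT'[of "F \<alpha> \<mu>" a 0 b] Fa Fb F_cont_01[of a b \<alpha> \<mu>] a0 b0 by auto
  then show ?thesis using a0 b0 by (intro exI[of _ r]) auto
qed

lemma F_root_1inf:
  assumes "0 < \<alpha>" "0 < \<mu>"
  shows "\<exists>r. 1 < r \<and> F \<alpha> \<mu> r = 0"
proof -
  define c where "c = cc \<alpha> \<mu>"
  have c: "c > 0" using cc_pos[OF assms(2)] c_def by simp
  define T where "T = 2 / c + 1"
  have T: "T > 0" unfolding T_def using c by (intro add_pos_pos divide_pos_pos) auto
  define a where "a = 1 + min 1 (T powr (- 1 / \<alpha>))"
  have a0: "1 < a" "a \<le> 2" using T by (auto simp: a_def)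
  have aT: "T \<le> (a - 1) powr (- \<alpha>)"
    using a0 T assms by (intro powr_neg_big) (auto simp: a_def)
  have "c * T = 2 + c" using c by (simp add: T_def field_simps)
  moreover have "c * T \<le> c * (a - 1) powr (- \<alpha>)" using aT c by simp
  moreover have "0 \<le> c * (a + 1) powr (- \<alpha>)" using c by simp
  moreover have "0 \<le> \<mu> * c * a powr (- \<alpha>)" using c assms by simp
  moreover have "F \<alpha> \<mu> a = a - c * (a - 1) powr (- \<alpha>) - c * (a + 1) powr (- \<alpha>) - \<mu> * c * a powr (- \<alpha>)"
    unfolding c_def using a0 by (intro F_1inf) auto
  moreover have "0 < \<mu> * c" using c assms by simp
  ultimately have Fa: "F \<alpha> \<mu> a < 0" using a0 c by linarith
  define b where "b = 2 * c + \<mu> * c + 3"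
  have b0: "3 \<le> b" using c assms by (simp add: b_def)
  have "(b - 1) powr (- \<alpha>) \<le> 1" "(b + 1) powr (- \<alpha>) \<le> 1" "b powr (- \<alpha>) \<le> 1"
    using b0 assms by (auto intro!: powr_neg_le1)
  then have "c * (b - 1) powr (- \<alpha>) \<le> c" "c * (b + 1) powr (- \<alpha>) \<le> c" "\<mu> * c * b powr (- \<alpha>) \<le> \<mu> * c"
    using c assms by auto
  moreover have "F \<alpha> \<mu> b = b - c * (b - 1) powr (- \<alpha>) - c * (b + 1) powr (- \<alpha>) - \<mu> * c * b powr (- \<alpha>)"
    unfolding c_def using b0 by (intro F_1inf) auto
  ultimately have Fb: "F \<alpha> \<mu> b > 0" using b0 c unfolding b_def by linarith
  have "a \<le> b" using a0 b0 by simp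
  then obtain r where r: "a \<le> r" "r \<le> b" "F \<alpha> \<mu> r = 0"
    using IVT'[of "F \<alpha> \<mu>" a 0 b] Fa Fb F_cont_1inf[of a b \<alpha> \<mu>] a0 by auto
  then show ?thesis using a0 by (intro exI[of _ r]) auto
qed


definition P :: "real \<Rightarrow> real \<Rightarrow> real \<Rightarrow> real" where
  "P \<alpha> \<mu> t = 1 - 2 * cc \<alpha> \<mu> * (sqrt (1 + t\<^sup>2)) powr (- \<alpha> - 1) - \<mu> * cc \<alpha> \<mu> * t powr (- \<alpha> - 1)"

lemma G_imag:
  assumes "Re u = 0"
  shows "Re (G \<alpha> \<mu> u) = 0" "Im (G \<alpha> \<mu> u) = Im u * P \<alpha> \<mu> \<bar>Im u\<bar>"
proof -
  have n1: "norm (u - 1) = sqrt (1 + (Im u)\<^sup>2)" "norm (u + 1) = sqrt (1 + (Im u)\<^sup>2)" "norm u = \<bar>Im u\<bar>"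
    using assms by (simp_all add: cmod_def)
  show "Re (G \<alpha> \<mu> u) = 0" unfolding Re_G E_def n1 using assms by simp
  show "Im (G \<alpha> \<mu> u) = Im u * P \<alpha> \<mu> \<bar>Im u\<bar>" unfolding Im_G E_def n1 P_def by (simp add: algebra_simps)
qed

lemma P_mono:
  assumes "0 < \<alpha>" "0 < \<mu>" "0 < a" "a < b"
  shows "P \<alpha> \<mu> a < P \<alpha> \<mu> b"
proof -
  have c: "cc \<alpha> \<mu> > 0" using cc_pos[OF assms(2)] .
  have s: "sqrt (1 + a\<^sup>2) < sqrt (1 + b\<^sup>2)" using assms by (simp add: power_strict_mono)
  have 1: "sqrt (1 + b\<^sup>2) powr (- \<alpha> - 1) < sqrt (1 + a\<^sup>2) powr (- \<alpha> - 1)"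
    using assms s add_pos_nonneg[of 1 "a\<^sup>2"] by (intro powr_less_mono2_neg) auto
  have 3: "b powr (- \<alpha> - 1) < a powr (- \<alpha> - 1)"
    using assms by (intro powr_less_mono2_neg) auto
  have "2 * cc \<alpha> \<mu> * sqrt (1 + b\<^sup>2) powr (- \<alpha> - 1) < 2 * cc \<alpha> \<mu> * sqrt (1 + a\<^sup>2) powr (- \<alpha> - 1)" using 1 c by simp
  moreover have "\<mu> * cc \<alpha> \<mu> * b powr (- \<alpha> - 1) < \<mu> * cc \<alpha> \<mu> * a powr (- \<alpha> - 1)" using 3 c assms by simp
  ultimately show ?thesis unfolding P_def by linarith
qed

lemma P_root:
  assumes "0 < \<alpha>" "0 < \<mu>"
  shows "\<exists>r. 1 < r \<and> P \<alpha> \<mu> r = 0"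
proof -
  define c where "c = cc \<alpha> \<mu>"
  have c: "c > 0" using cc_pos[OF assms(2)] c_def by simp
  have cs: "c * (2 powr (- \<alpha>) + \<mu>) = 1"
  proof -
    have "0 < 2 powr (- \<alpha>) + \<mu>" using assms by (intro add_pos_pos) auto
    then show ?thesis by (simp add: c_def cc_def sMax_def)
  qed
  have "sqrt (1 + 1\<^sup>2) powr (- \<alpha> - 1) = 2 powr ((- \<alpha> - 1) / 2)"
    by (simp add: powr_half_sqrt[symmetric] powr_powr)
  moreover have "2 * 2 powr ((- \<alpha> - 1) / 2) = (2::real) powr (1 + (- \<alpha> - 1) / 2)"
    by (simp add: powr_add)
  moreover have "(2::real) powr (- \<alpha>) < 2 powr (1 + (- \<alpha> - 1) / 2)"
    using assms by (intro powr_less_mono) (auto simp: field_simps)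
  ultimately have "2 powr (- \<alpha>) < 2 * sqrt (1 + 1\<^sup>2) powr (- \<alpha> - 1)" by simp
  then have "c * 2 powr (- \<alpha>) < c * (2 * sqrt (1 + 1\<^sup>2) powr (- \<alpha> - 1))" using c by simp
  then have P1: "P \<alpha> \<mu> 1 < 0" using cs unfolding P_def c_def[symmetric] by (simp add: algebra_simps)
  define b where "b = 2 * c + \<mu> * c + 2"
  have b0: "2 \<le> b" using c assms by (simp add: b_def)
  have "sqrt (1 + b\<^sup>2) powr (- \<alpha> - 1) \<le> b powr (- \<alpha> - 1)"
    using b0 assms by (intro powr_mono2') (auto simp: real_le_rsqrt)
  moreover have "b powr (- \<alpha> - 1) \<le> b powr (-1)" using b0 assms by (intro powr_mono) auto
  moreover have "b powr (-1) = 1 / b" using b0 by (simp add: powr_minus divide_inverse)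
  ultimately have h1: "sqrt (1 + b\<^sup>2) powr (- \<alpha> - 1) \<le> 1 / b" and h2: "b powr (- \<alpha> - 1) \<le> 1 / b" by linarith+
  have "2 * c * sqrt (1 + b\<^sup>2) powr (- \<alpha> - 1) \<le> 2 * c * (1 / b)"
    by (rule mult_left_mono[OF h1]) (use c in simp)
  moreover have "\<mu> * c * b powr (- \<alpha> - 1) \<le> \<mu> * c * (1 / b)"
    by (rule mult_left_mono[OF h2]) (use c assms in simp)
  moreover have "2 * c * (1 / b) + \<mu> * c * (1 / b) < 1"
  proof -
    have "2 * c * (1 / b) + \<mu> * c * (1 / b) = (2 * c + \<mu> * c) / b" by (simp add: add_divide_distrib)
    moreover have "2 * c + \<mu> * c < b" by (simp add: b_def)
    ultimately show ?thesis using b0 by (simp add: pos_divide_less_eq)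
  qed
  ultimately have Pb: "P \<alpha> \<mu> b > 0" unfolding P_def c_def[symmetric] by linarith
  have cont: "continuous_on {1..b} (P \<alpha> \<mu>)" unfolding P_def
    by (intro continuous_intros) (auto simp: add_nonneg_eq_0_iff)
  obtain r where r: "1 \<le> r" "r \<le> b" "P \<alpha> \<mu> r = 0"
    using IVT'[of "P \<alpha> \<mu>" 1 0 b] P1 Pb cont b0 by auto
  then show ?thesis using P1 by (intro exI[of _ r]) (auto simp: order.order_iff_strict)
qed



lemma F_unique_01:
  assumes "0 < \<alpha>" "0 < \<mu>" "0 < r" "r < 1" "F \<alpha> \<mu> r = 0" "0 < x" "x < 1" "F \<alpha> \<mu> x = 0"
  shows "x = r"
  using F_mono_01[OF assms(1,2), of x r] F_mono_01[OF assms(1,2), of r x] assms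
  by (cases x r rule: linorder_cases) auto

lemma F_unique_1inf:
  assumes "0 < \<alpha>" "0 < \<mu>" "1 < r" "F \<alpha> \<mu> r = 0" "1 < x" "F \<alpha> \<mu> x = 0"
  shows "x = r"
  using F_mono_1inf[OF assms(1,2), of x r] F_mono_1inf[OF assms(1,2), of r x] assms
  by (cases x r rule: linorder_cases) auto

lemma P_unique:
  assumes "0 < \<alpha>" "0 < \<mu>" "0 < r" "P \<alpha> \<mu> r = 0" "0 < x" "P \<alpha> \<mu> x = 0"
  shows "x = r"
  using P_mono[OF assms(1,2), of x r] P_mono[OF assms(1,2), of r x] assms
  by (cases x r rule: linorder_cases) auto

lemma G_real_zero: "F \<alpha> \<mu> r = 0 \<Longrightarrow> G \<alpha> \<mu> (complex_of_real r) = 0"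
  by (simp add: complex_eq_iff Re_G_real Im_G_real)

lemma crit_set:
  assumes a: "1 < \<alpha>" and m: "0 < \<mu>"
    and r2: "0 < r2" "r2 < 1" "F \<alpha> \<mu> r2 = 0"
    and r1: "1 < r1" "F \<alpha> \<mu> r1 = 0"
    and r3: "1 < r3" "P \<alpha> \<mu> r3 = 0"
  shows "{u. critical_point (V \<alpha> \<mu>) u} =
      {complex_of_real r2, - complex_of_real r2, complex_of_real r1, - complex_of_real r1,
       complex_of_real r3 * cis (pi / 2), - (complex_of_real r3 * cis (pi / 2))}"
proof (intro set_eqI iffI)
  have a0: "0 < \<alpha>" using a by simp
  fix u assume "u \<in> {u. critical_point (V \<alpha> \<mu>) u}"
  then have u: "u \<notin> {0, 1, -1}" and G0: "G \<alpha> \<mu> u = 0" using critical_iff[OF a] by auto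
  show "u \<in> {complex_of_real r2, - complex_of_real r2, complex_of_real r1, - complex_of_real r1,
       complex_of_real r3 * cis (pi / 2), - (complex_of_real r3 * cis (pi / 2))}"
  proof (cases "Im u = 0")
    case False
    have re: "Re u = 0" using offaxis[OF a m u False G0] .
    have "Im u * P \<alpha> \<mu> \<bar>Im u\<bar> = 0" using G_imag(2)[OF re, of \<alpha> \<mu>] G0 by simp
    then have "P \<alpha> \<mu> \<bar>Im u\<bar> = 0" using False by simp
    then have "\<bar>Im u\<bar> = r3" using P_unique[OF a0 m _ r3(2), of "\<bar>Im u\<bar>"] r3 False by auto
    then have "u = complex_of_real r3 * \<i> \<or> u = - (complex_of_real r3 * \<i>)"
      using re by (cases "Im u \<ge> 0") (auto simp: complex_eq_iff)
    then show ?thesis by auto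
  next
    case True
    define x where "x = Re u"
    have ux: "u = complex_of_real x" using True by (simp add: complex_eq_iff x_def)
    have Fx: "F \<alpha> \<mu> x = 0" using G0 Re_G_real[of \<alpha> \<mu> x] ux by simp
    have x: "x \<noteq> 0" "x \<noteq> 1" "x \<noteq> -1" using u ux by auto
    have pos: "y = r2 \<or> y = r1" if "0 < y" "y \<noteq> 1" "F \<alpha> \<mu> y = 0" for y
    proof (cases "y < 1")
      case True then show ?thesis using F_unique_01[OF a0 m r2 that(1) True that(3)] by simp
    next
      case False then have "1 < y" using that by simp
      then show ?thesis using F_unique_1inf[OF a0 m r1 _ that(3)] by simp
    qed
    show ?thesis
    proof (cases "x > 0")
      case True then show ?thesis using pos[of x] Fx x ux by auto
    next
      case False
      then have "0 < - x" "- x \<noteq> 1" using x by auto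
      moreover have "F \<alpha> \<mu> (- x) = 0" using F_neg[of \<alpha> \<mu> x] Fx by simp
      ultimately have "- x = r2 \<or> - x = r1" using pos by blast
      then show ?thesis using ux by auto
    qed
  qed
next
  fix u assume "u \<in> {complex_of_real r2, - complex_of_real r2, complex_of_real r1, - complex_of_real r1,
       complex_of_real r3 * cis (pi / 2), - (complex_of_real r3 * cis (pi / 2))}"
  then have cases: "u = complex_of_real r2 \<or> u = - complex_of_real r2 \<or> u = complex_of_real r1 \<or> u = - complex_of_real r1
     \<or> u = complex_of_real r3 * \<i> \<or> u = - (complex_of_real r3 * \<i>)" by simp
  have nz: "u \<notin> {0, 1, -1}" using cases r1 r2 r3 by (auto simp: complex_eq_iff)
  have Gr2: "G \<alpha> \<mu> (complex_of_real r2) = 0" using G_real_zero r2 by simp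
  have Gr1: "G \<alpha> \<mu> (complex_of_real r1) = 0" using G_real_zero r1 by simp
  have Gr3: "G \<alpha> \<mu> (complex_of_real r3 * \<i>) = 0"
    using G_imag[of "complex_of_real r3 * \<i>" \<alpha> \<mu>] r3 by (simp add: complex_eq_iff)
  have "G \<alpha> \<mu> u = 0" using cases Gr1 Gr2 Gr3 G_neg by auto
  then show "u \<in> {u. critical_point (V \<alpha> \<mu>) u}" using critical_iff[OF a] nz by auto
qed



lemma V_line_deriv:
  assumes "1 < \<alpha>" "p + complex_of_real t * d \<notin> {0, 1, -1}"
  shows "((\<lambda>t. V \<alpha> \<mu> (p + complex_of_real t * d)) has_real_derivative (G \<alpha> \<mu> (p + complex_of_real t * d) \<bullet> d)) (at t)"
proof -
  have l: "((\<lambda>t. p + complex_of_real t * d) has_derivative (\<lambda>h. complex_of_real h * d)) (at t)"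
    by (intro derivative_eq_intros) auto
  have "((\<lambda>t. V \<alpha> \<mu> (p + complex_of_real t * d)) has_derivative (\<lambda>h. G \<alpha> \<mu> (p + complex_of_real t * d) \<bullet> (complex_of_real h * d))) (at t)"
    using has_derivative_compose[OF l V_deriv[OF assms]] by simp
  moreover have "(\<lambda>h. G \<alpha> \<mu> (p + complex_of_real t * d) \<bullet> (complex_of_real h * d)) = (\<lambda>h. (G \<alpha> \<mu> (p + complex_of_real t * d) \<bullet> d) * h)"
    by (auto simp: inner_complex_def algebra_simps)
  ultimately show ?thesis by (simp add: has_field_derivative_def)
qed


lemma V_real_deriv:
  assumes "1 < \<alpha>" "0 < t" "t \<noteq> 1"
  shows "((\<lambda>t. V \<alpha> \<mu> (complex_of_real t)) has_real_derivative F \<alpha> \<mu> t) (at t)"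
proof -
  have "complex_of_real t \<notin> {0, 1, -1}" using assms by (auto simp: complex_eq_iff)
  then have "((\<lambda>t. V \<alpha> \<mu> (0 + complex_of_real t * 1)) has_real_derivative (G \<alpha> \<mu> (0 + complex_of_real t * 1) \<bullet> 1)) (at t)"
    using V_line_deriv[OF assms(1), of 0 t 1 \<mu>] by simp
  then show ?thesis by (simp add: inner_complex_def Re_G_real)
qed

lemma not_lmax_real:
  assumes a: "1 < \<alpha>" and m: "0 < \<mu>" and r: "0 < r" "r \<noteq> 1" "F \<alpha> \<mu> r = 0" and e: "e > 0"
  shows "\<exists>v\<in>ball (complex_of_real r) e. V \<alpha> \<mu> (complex_of_real r) < V \<alpha> \<mu> v"
proof -
  have a0: "0 < \<alpha>" using a by simp
  obtain d where d: "0 < d" "d < e" "\<And>t. r \<le> t \<Longrightarrow> t \<le> r + d \<Longrightarrow> 0 < t \<and> t \<noteq> 1"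
    "\<And>t. r < t \<Longrightarrow> t \<le> r + d \<Longrightarrow> F \<alpha> \<mu> t > 0"
  proof (cases "r < 1")
    case True
    define d where "d = min (e/2) ((1 - r)/2)"
    have dd: "0 < d" "d < e" using True e by (auto simp: d_def)
    have "d \<le> (1 - r)/2" unfolding d_def by (rule min.cobounded2)
    then have rd: "r + d < 1" using True by (simp add: field_simps)
    moreover have "\<And>t. r \<le> t \<Longrightarrow> t \<le> r + d \<Longrightarrow> 0 < t \<and> t \<noteq> 1" using True r rd by auto
    moreover have "\<And>t. r < t \<Longrightarrow> t \<le> r + d \<Longrightarrow> F \<alpha> \<mu> t > 0"
      using F_mono_01[OF a0 m r(1)] r True rd by force
    ultimately show ?thesis using that dd by blast
  next
    case False
    then have r1: "1 < r" using r by simp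
    define d where "d = e/2"
    have "0 < d" "d < e" using e by (auto simp: d_def)
    moreover have "\<And>t. r \<le> t \<Longrightarrow> t \<le> r + d \<Longrightarrow> 0 < t \<and> t \<noteq> 1" using r1 by (auto simp: d_def)
    moreover have "\<And>t. r < t \<Longrightarrow> t \<le> r + d \<Longrightarrow> F \<alpha> \<mu> t > 0"
      using F_mono_1inf[OF a0 m r1] r by (auto simp: d_def)
    ultimately show ?thesis using that by blast
  qed
  have cont: "continuous_on {r..r+d} (\<lambda>t. V \<alpha> \<mu> (complex_of_real t))"
  proof (intro continuous_at_imp_continuous_on ballI)
    fix t assume "t \<in> {r..r+d}"
    then have "0 < t" "t \<noteq> 1" using d(3)[of t] by auto
    then show "isCont (\<lambda>t. V \<alpha> \<mu> (complex_of_real t)) t"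
      using V_real_deriv[OF a, of t \<mu>] DERIV_isCont by blast
  qed
  have "V \<alpha> \<mu> (complex_of_real r) < V \<alpha> \<mu> (complex_of_real (r + d))"
  proof (rule DERIV_pos_imp_increasing_open[OF _ _ cont])
    show "r < r + d" using d by simp
    fix t assume "r < t" "t < r + d"
    then show "\<exists>y. ((\<lambda>t. V \<alpha> \<mu> (complex_of_real t)) has_real_derivative y) (at t) \<and> 0 < y"
      using d(3,4)[of t] V_real_deriv[OF a, of t \<mu>] by auto
  qed
  moreover have "complex_of_real (r + d) \<in> ball (complex_of_real r) e"
    using d by (simp add: dist_norm)
  ultimately show ?thesis by blast
qed


lemma not_lmin_real:
  assumes a: "1 < \<alpha>" and m: "0 < \<mu>" and r: "0 < r" "r \<noteq> 1" "F \<alpha> \<mu> r = 0" and e: "e > 0"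
  shows "\<exists>v\<in>ball (complex_of_real r) e. V \<alpha> \<mu> v < V \<alpha> \<mu> (complex_of_real r)"
proof -
  define c where "c = cc \<alpha> \<mu>"
  have c: "c > 0" using cc_pos[OF m] c_def by simp
  define p where "p = complex_of_real r"
  define pt where "pt t = p + complex_of_real t * \<i>" for t
  define q where "q t = 1 - c * E \<alpha> (pt t - 1) - c * E \<alpha> (pt t + 1) - \<mu> * c * E \<alpha> (pt t)" for t
  have Impt: "Im (pt t) = t" "Re (pt t) = r" for t by (simp_all add: pt_def p_def)
  have nm: "pt t \<notin> {0, 1, -1}" for t
  proof (cases "t = 0")
    case True then show ?thesis using r by (auto simp: pt_def p_def complex_eq_iff)
  next
    case False then show ?thesis using Impt(1)[of t] by auto
  qed
  have ImG: "Im (G \<alpha> \<mu> (pt t)) = t * q t" for t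
    unfolding Im_G Impt q_def c_def by (simp add: algebra_simps)
  have der: "((\<lambda>t. V \<alpha> \<mu> (pt t)) has_real_derivative t * q t) (at t)" for t
  proof -
    have "((\<lambda>t. V \<alpha> \<mu> (p + complex_of_real t * \<i>)) has_real_derivative (G \<alpha> \<mu> (p + complex_of_real t * \<i>) \<bullet> \<i>)) (at t)"
      using V_line_deriv[OF a, of p t \<i> \<mu>] nm[of t] by (simp add: pt_def)
    moreover have "G \<alpha> \<mu> (p + complex_of_real t * \<i>) \<bullet> \<i> = t * q t"
      using ImG[of t] by (simp add: inner_complex_def pt_def)
    ultimately show ?thesis by (simp add: pt_def)
  qed
  have q0: "q 0 < 0"
  proof -
    have pt0: "pt 0 = p" by (simp add: pt_def)
    have Fr: "F \<alpha> \<mu> r = r - c * E \<alpha> (p - 1) * (r - 1) - c * E \<alpha> (p + 1) * (r + 1) - \<mu> * c * E \<alpha> p * r"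
      using Re_G_real[of \<alpha> \<mu> r] unfolding Re_G p_def c_def by simp
    have "r * q 0 = F \<alpha> \<mu> r + c * (E \<alpha> (p + 1) - E \<alpha> (p - 1))"
      unfolding Fr q_def pt0 by (simp add: algebra_simps)
    also have "\<dots> = c * (E \<alpha> (p + 1) - E \<alpha> (p - 1))" using r by simp
    also have "\<dots> < 0"
    proof -
      have n1: "norm (p - 1) = \<bar>r - 1\<bar>" "norm (p + 1) = r + 1"
      proof -
        have "p - 1 = complex_of_real (r - 1)" "p + 1 = complex_of_real (r + 1)" by (simp_all add: p_def)
        then show "norm (p - 1) = \<bar>r - 1\<bar>" "norm (p + 1) = r + 1" using r by (simp_all only: norm_of_real)
      qed
      have "(r + 1) powr (- \<alpha> - 1) < \<bar>r - 1\<bar> powr (- \<alpha> - 1)"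
        using r a by (intro powr_less_mono2_neg) auto
      then have "E \<alpha> (p + 1) < E \<alpha> (p - 1)" unfolding E_def n1 .
      then show ?thesis using c by (simp add: mult_less_0_iff)
    qed
    finally show ?thesis using r by (simp add: mult_less_0_iff)
  qed
  have qc: "isCont q 0"
  proof -
    have "pt 0 - 1 \<noteq> 0" "pt 0 + 1 \<noteq> 0" "pt 0 \<noteq> 0" using nm[of 0] by (auto simp: add_eq_0_iff2)
    then show ?thesis unfolding q_def E_def pt_def
      by (intro continuous_intros) auto
  qed
  have "eventually (\<lambda>t. q t < 0) (at 0)"
    using order_tendstoD(2)[OF qc[unfolded isCont_def] q0] .
  then obtain \<delta> where dl: "\<delta> > 0" "\<And>t. t \<noteq> 0 \<Longrightarrow> dist t 0 < \<delta> \<Longrightarrow> q t < 0"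
    unfolding eventually_at by blast
  define t0 where "t0 = min (e/2) (\<delta>/2)"
  have t0: "0 < t0" "t0 < e" "t0 < \<delta>" using e dl by (auto simp: t0_def)
  have cont: "continuous_on {0..t0} (\<lambda>t. V \<alpha> \<mu> (pt t))"
    using der DERIV_isCont by (blast intro: continuous_at_imp_continuous_on)
  have "V \<alpha> \<mu> (pt t0) < V \<alpha> \<mu> (pt 0)"
  proof (rule DERIV_neg_imp_decreasing_open[OF t0(1) _ cont])
    fix t :: real assume "0 < t" "t < t0"
    then have "q t < 0" using dl(2)[of t] t0 by auto
    then show "\<exists>y. ((\<lambda>t. V \<alpha> \<mu> (pt t)) has_real_derivative y) (at t) \<and> y < 0"
      using der[of t] \<open>0 < t\<close> by (intro exI[of _ "t * q t"]) (simp add: mult_pos_neg)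
  qed
  moreover have "pt 0 = complex_of_real r" by (simp add: pt_def p_def)
  moreover have "pt t0 \<in> ball (complex_of_real r) e"
    using t0 by (simp add: pt_def p_def dist_norm norm_mult)
  ultimately show ?thesis by metis
qed



lemma phi_nonneg: "1 < \<alpha> \<Longrightarrow> 0 \<le> phi \<alpha> r"
  by (simp add: phi_def)

lemma phi_anti: "1 < \<alpha> \<Longrightarrow> 0 < x \<Longrightarrow> x \<le> y \<Longrightarrow> phi \<alpha> y \<le> phi \<alpha> x"
  unfolding phi_def by (intro divide_right_mono powr_mono2') auto

lemma V_lower:
  assumes "1 < \<alpha>" "0 < \<mu>"
  shows "(norm v)\<^sup>2 / 2 \<le> V \<alpha> \<mu> v" "cc \<alpha> \<mu> * phi \<alpha> (norm (v - 1)) \<le> V \<alpha> \<mu> v"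
    "cc \<alpha> \<mu> * phi \<alpha> (norm (v + 1)) \<le> V \<alpha> \<mu> v" "\<mu> * cc \<alpha> \<mu> * phi \<alpha> (norm v) \<le> V \<alpha> \<mu> v"
proof -
  have c: "cc \<alpha> \<mu> > 0" using cc_pos[OF assms(2)] .
  have p: "0 \<le> cc \<alpha> \<mu> * phi \<alpha> (norm (v - 1))" "0 \<le> cc \<alpha> \<mu> * phi \<alpha> (norm (v + 1))"
     "0 \<le> \<mu> * cc \<alpha> \<mu> * phi \<alpha> (norm v)"
    using c assms phi_nonneg[OF assms(1)] by auto
  have n: "0 \<le> (norm v)\<^sup>2 / 2" by simp
  have eq: "V \<alpha> \<mu> v = (norm v)\<^sup>2 / 2 + cc \<alpha> \<mu> * phi \<alpha> (norm (v + 1)) + cc \<alpha> \<mu> * phi \<alpha> (norm (v - 1))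
     + \<mu> * cc \<alpha> \<mu> * phi \<alpha> (norm v)"
    unfolding V_alt by (simp add: power2_norm_eq_inner)
  show "(norm v)\<^sup>2 / 2 \<le> V \<alpha> \<mu> v" "cc \<alpha> \<mu> * phi \<alpha> (norm (v - 1)) \<le> V \<alpha> \<mu> v"
    "cc \<alpha> \<mu> * phi \<alpha> (norm (v + 1)) \<le> V \<alpha> \<mu> v" "\<mu> * cc \<alpha> \<mu> * phi \<alpha> (norm v) \<le> V \<alpha> \<mu> v"
    using p n unfolding eq by linarith+
qed


lemma min_r3:
  assumes a: "1 < \<alpha>" and m: "0 < \<mu>"
    and r2: "0 < r2" "r2 < 1" "F \<alpha> \<mu> r2 = 0"
    and r1: "1 < r1" "F \<alpha> \<mu> r1 = 0"
    and r3: "1 < r3" "P \<alpha> \<mu> r3 = 0"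
  shows "local_min_pt (V \<alpha> \<mu>) (complex_of_real r3 * \<i>)"
proof -
  define c where "c = cc \<alpha> \<mu>"
  have c: "c > 0" using cc_pos[OF m] c_def by simp
  define z where "z = complex_of_real r3 * \<i>"
  define M where "M = V \<alpha> \<mu> z"
  have M0: "0 \<le> M" unfolding M_def using V_lower(1)[OF a m, of z] by (smt (verit) zero_le_power2 divide_nonneg_pos)
  define R where "R = 2 * M + 2"
  have R: "M < R\<^sup>2 / 2"
  proof -
    have "R\<^sup>2 / 2 = 2 * (M + 1) * (M + 1)" by (simp add: R_def power2_eq_square field_simps)
    moreover have "M + 1 \<le> (M + 1) * (M + 1)" using M0 by (simp add: mult_le_cancel_left1)
    ultimately show ?thesis using M0 by linarith
  qed
  define T where "T = (M + 1) * (\<alpha> - 1) * (1 / c + 1 / (\<mu> * c)) + 1"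
  have T: "T > 0" unfolding T_def using M0 a c m by (intro add_nonneg_pos mult_nonneg_nonneg) auto
  define \<epsilon> where "\<epsilon> = T powr (1 / (1 - \<alpha>))"
  have e0: "\<epsilon> > 0" using T by (simp add: \<epsilon>_def)
  have phie: "phi \<alpha> \<epsilon> = T / (\<alpha> - 1)"
    using T a by (simp add: \<epsilon>_def phi_def powr_powr)
  have pe1: "M < c * phi \<alpha> \<epsilon>" and pe2: "M < \<mu> * c * phi \<alpha> \<epsilon>"
  proof -
    have "c * phi \<alpha> \<epsilon> = c * T / (\<alpha> - 1)" by (simp add: phie)
    also have "\<dots> = (M + 1) * (1 + 1 / \<mu>) + c / (\<alpha> - 1)"
      using a c m by (simp add: T_def field_simps)
    finally have "c * phi \<alpha> \<epsilon> = (M + 1) * (1 + 1 / \<mu>) + c / (\<alpha> - 1)" .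
    moreover have "0 \<le> (M + 1) * (1 / \<mu>)" "0 < c / (\<alpha> - 1)" using M0 m c a by auto
    ultimately show "M < c * phi \<alpha> \<epsilon>" by (simp add: algebra_simps)
    have "\<mu> * c * phi \<alpha> \<epsilon> = \<mu> * c * T / (\<alpha> - 1)" by (simp add: phie)
    also have "\<dots> = (M + 1) * (\<mu> + 1) + \<mu> * c / (\<alpha> - 1)"
      using a c m by (simp add: T_def field_simps)
    finally have "\<mu> * c * phi \<alpha> \<epsilon> = (M + 1) * (\<mu> + 1) + \<mu> * c / (\<alpha> - 1)" .
    moreover have "0 \<le> (M + 1) * \<mu>" "0 < \<mu> * c / (\<alpha> - 1)" using M0 m c a by auto
    ultimately show "M < \<mu> * c * phi \<alpha> \<epsilon>" by (simp add: algebra_simps)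
  qed
  define K where "K = {v::complex. norm v \<le> R \<and> \<epsilon> \<le> norm v \<and> \<epsilon> \<le> norm (v - 1) \<and> \<epsilon> \<le> norm (v + 1)}"
  define U where "U = {v::complex. norm v < R \<and> \<epsilon> < norm v \<and> \<epsilon> < norm (v - 1) \<and> \<epsilon> < norm (v + 1)}"
  have UK: "U \<subseteq> K" by (auto simp: U_def K_def)
  have Uo: "open U" unfolding U_def
    by (intro open_Collect_conj open_Collect_less continuous_intros)
  have Kc: "compact K"
  proof -
    have "closed K" unfolding K_def
      by (intro closed_Collect_conj closed_Collect_le continuous_intros)
    moreover have "bounded K" unfolding K_def bounded_iff by auto
    ultimately show ?thesis by (simp add: compact_eq_bounded_closed)
  qed
  have Kn: "v \<notin> {0, 1, -1}" if "v \<in> K" for v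
  proof -
    have "\<epsilon> \<le> norm v" "\<epsilon> \<le> norm (v - 1)" "\<epsilon> \<le> norm (v + 1)" using that by (auto simp: K_def)
    then have "v \<noteq> 0" "v - 1 \<noteq> 0" "v + 1 \<noteq> 0" using e0 by auto
    then show ?thesis by (auto simp: add_eq_0_iff2)
  qed
  have inU: "v \<in> U" if v: "v \<notin> {0, 1, -1}" "V \<alpha> \<mu> v \<le> M" for v
  proof -
    have "norm v < R"
    proof (rule ccontr)
      assume "\<not> norm v < R"
      then have "R\<^sup>2 \<le> (norm v)\<^sup>2" using M0 by (intro power_mono) (auto simp: R_def)
      then show False using V_lower(1)[OF a m, of v] R v by linarith
    qed
    moreover have "\<epsilon> < norm v"
    proof (rule ccontr)
      assume "\<not> \<epsilon> < norm v"
      then have "phi \<alpha> \<epsilon> \<le> phi \<alpha> (norm v)" using v a by (intro phi_anti) auto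
      then have "\<mu> * c * phi \<alpha> \<epsilon> \<le> \<mu> * c * phi \<alpha> (norm v)" using m c by simp
      then show False using V_lower(4)[OF a m, of v] pe2 v unfolding c_def by linarith
    qed
    moreover have "\<epsilon> < norm (v - 1)"
    proof (rule ccontr)
      assume "\<not> \<epsilon> < norm (v - 1)"
      then have "phi \<alpha> \<epsilon> \<le> phi \<alpha> (norm (v - 1))" using v a by (intro phi_anti) auto
      then have "c * phi \<alpha> \<epsilon> \<le> c * phi \<alpha> (norm (v - 1))" using c by simp
      then show False using V_lower(2)[OF a m, of v] pe1 v unfolding c_def by linarith
    qed
    moreover have "\<epsilon> < norm (v + 1)"
    proof (rule ccontr)
      assume "\<not> \<epsilon> < norm (v + 1)"
      moreover have "v + 1 \<noteq> 0" using v by (auto simp: add_eq_0_iff2)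
      ultimately have "phi \<alpha> \<epsilon> \<le> phi \<alpha> (norm (v + 1))" using a by (intro phi_anti) auto
      then have "c * phi \<alpha> \<epsilon> \<le> c * phi \<alpha> (norm (v + 1))" using c by simp
      then show False using V_lower(3)[OF a m, of v] pe1 v unfolding c_def by linarith
    qed
    ultimately show ?thesis by (simp add: U_def)
  qed
  have zn: "z \<notin> {0, 1, -1}" using r3 by (auto simp: z_def complex_eq_iff)
  have zU: "z \<in> U" using inU[OF zn] by (simp add: M_def)
  have Vc: "continuous_on K (V \<alpha> \<mu>)"
  proof (intro continuous_at_imp_continuous_on ballI)
    fix x assume "x \<in> K"
    show "isCont (V \<alpha> \<mu>) x" by (rule has_derivative_continuous[OF V_deriv[OF a Kn[OF \<open>x \<in> K\<close>]]])
  qed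
  obtain w where w: "w \<in> K" "\<And>y. y \<in> K \<Longrightarrow> V \<alpha> \<mu> w \<le> V \<alpha> \<mu> y"
    using continuous_attains_inf[OF Kc _ Vc] zU UK by blast
  have negK: "- y \<in> K" if "y \<in> K" for y
  proof -
    have e1: "- y - 1 = - (y + 1)" "- y + 1 = - (y - 1)" by simp_all
    have "norm (- y - 1) = norm (y + 1)" "norm (- y + 1) = norm (y - 1)"
      unfolding e1 by (rule norm_minus_cancel)+
    then show ?thesis using that by (simp add: K_def)
  qed
  have minK: "V \<alpha> \<mu> (- w) \<le> V \<alpha> \<mu> y" if "y \<in> K" for y
  proof -
    have "V \<alpha> \<mu> w \<le> V \<alpha> \<mu> (- y)" using w(2) negK[OF that] by blast
    then show ?thesis by (simp add: V_neg)
  qed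
  have zK: "z \<in> K" using zU UK by blast
  have wM: "V \<alpha> \<mu> w \<le> M" using w(2)[OF zK] by (simp add: M_def)
  have wU: "w \<in> U" "- w \<in> U"
    using inU[OF Kn[OF w(1)] wM] inU[OF Kn[OF negK[OF w(1)]]] wM by (simp_all add: V_neg)
  have crit: "critical_point (V \<alpha> \<mu>) w"
  proof -
    have "(\<lambda>h. G \<alpha> \<mu> w \<bullet> h) = (\<lambda>h. 0)"
    proof (rule differential_zero_maxmin[OF wU(1) Uo V_deriv[OF a Kn[OF w(1)]]])
      show "(\<forall>y\<in>U. V \<alpha> \<mu> y \<le> V \<alpha> \<mu> w) \<or> (\<forall>y\<in>U. V \<alpha> \<mu> w \<le> V \<alpha> \<mu> y)"
        using w(2) UK by blast
    qed
    moreover have "(V \<alpha> \<mu> has_derivative (\<lambda>h. G \<alpha> \<mu> w \<bullet> h)) (at w)"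
      by (rule V_deriv[OF a Kn[OF w(1)]])
    ultimately show ?thesis using Kn[OF w(1)] unfolding critical_point_def by simp
  qed
  have notr: "x \<noteq> complex_of_real r" if hx: "x \<in> U" and hm: "\<And>y. y \<in> K \<Longrightarrow> V \<alpha> \<mu> x \<le> V \<alpha> \<mu> y"
     and hr: "0 < r" "r \<noteq> 1" "F \<alpha> \<mu> r = 0" for x r
  proof
    assume xr: "x = complex_of_real r"
    obtain e where e: "e > 0" "ball x e \<subseteq> U" by (rule openE[OF Uo hx])
    obtain v where v: "v \<in> ball (complex_of_real r) e" "V \<alpha> \<mu> v < V \<alpha> \<mu> (complex_of_real r)"
      using not_lmin_real[OF a m hr(1) hr(2) hr(3) e(1)] by blast
    have "v \<in> ball x e" using v(1) xr by simp
    then have "v \<in> K" using e(2) UK by blast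
    then have "V \<alpha> \<mu> x \<le> V \<alpha> \<mu> v" by (rule hm)
    then show False using v(2) xr by simp
  qed
  have "w \<in> {u. critical_point (V \<alpha> \<mu>) u}" using crit by simp
  then have wS: "w \<in> {complex_of_real r2, - complex_of_real r2, complex_of_real r1, - complex_of_real r1,
       complex_of_real r3 * cis (pi / 2), - (complex_of_real r3 * cis (pi / 2))}"
    unfolding crit_set[OF a m r2 r1 r3] .
  have r2n: "r2 \<noteq> 1" using r2 by simp
  have r1n: "0 < r1" "r1 \<noteq> 1" using r1 by simp_all
  have n1: "w \<noteq> complex_of_real r2" by (rule notr[OF wU(1) w(2) r2(1) r2n r2(3)])
  have n2: "w \<noteq> complex_of_real r1" by (rule notr[OF wU(1) w(2) r1n r1(2)])
  have n3: "- w \<noteq> complex_of_real r2" by (rule notr[OF wU(2) minK r2(1) r2n r2(3)])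
  have n4: "- w \<noteq> complex_of_real r1" by (rule notr[OF wU(2) minK r1n r1(2)])
  have "w \<noteq> - complex_of_real r2" using n3 by auto
  moreover have "w \<noteq> - complex_of_real r1" using n4 by auto
  ultimately have "w = z \<or> w = - z" using wS n1 n2 by (simp add: z_def)
  then have zmin: "V \<alpha> \<mu> z \<le> V \<alpha> \<mu> y" if "y \<in> K" for y
  proof
    assume "w = z" then show ?thesis using w(2)[OF that] by simp
  next
    assume "w = - z" then show ?thesis using minK[OF that] by simp
  qed
  obtain e where e: "e > 0" "ball z e \<subseteq> U" by (rule openE[OF Uo zU])
  have "\<forall>v\<in>ball z e. V \<alpha> \<mu> z \<le> V \<alpha> \<mu> v" using zmin e UK by blast
  then show ?thesis unfolding local_min_pt_def z_def[symmetric] using e(1) by blast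
qed


lemma saddle_real:
  assumes a: "1 < \<alpha>" and m: "0 < \<mu>" and r: "0 < r" "r \<noteq> 1" "F \<alpha> \<mu> r = 0"
    and c: "critical_point (V \<alpha> \<mu>) (complex_of_real r)"
  shows "saddle_pt (V \<alpha> \<mu>) (complex_of_real r)"
  unfolding saddle_pt_def local_min_pt_def local_max_pt_def
proof (intro conjI c notI)
  assume "\<exists>e>0. \<forall>v\<in>ball (complex_of_real r) e. V \<alpha> \<mu> (complex_of_real r) \<le> V \<alpha> \<mu> v"
  then obtain e where e: "e > 0" "\<forall>v\<in>ball (complex_of_real r) e. V \<alpha> \<mu> (complex_of_real r) \<le> V \<alpha> \<mu> v" by blast
  obtain v where "v \<in> ball (complex_of_real r) e" "V \<alpha> \<mu> v < V \<alpha> \<mu> (complex_of_real r)"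
    using not_lmin_real[OF a m r e(1)] by blast
  then show False using e(2) by fastforce
next
  assume "\<exists>e>0. \<forall>v\<in>ball (complex_of_real r) e. V \<alpha> \<mu> v \<le> V \<alpha> \<mu> (complex_of_real r)"
  then obtain e where e: "e > 0" "\<forall>v\<in>ball (complex_of_real r) e. V \<alpha> \<mu> v \<le> V \<alpha> \<mu> (complex_of_real r)" by blast
  obtain v where "v \<in> ball (complex_of_real r) e" "V \<alpha> \<mu> (complex_of_real r) < V \<alpha> \<mu> v"
    using not_lmax_real[OF a m r e(1)] by blast
  then show False using e(2) by fastforce
qed

theorem mainTheorem11:
  fixes \<alpha> \<mu> :: real
  assumes "1 < \<alpha>" "\<alpha> < 3" "0 < \<mu>"
  shows "\<exists>r1 r2 r3 :: real. 0 < r2 \<and> r2 < 1 \<and> 1 < r1 \<and> 1 < r3 \<and>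
    {u. critical_point (V \<alpha> \<mu>) u} =
      {complex_of_real r2, - complex_of_real r2, complex_of_real r1, - complex_of_real r1,
       complex_of_real r3 * cis (pi / 2), - (complex_of_real r3 * cis (pi / 2))} \<and>
    saddle_pt (V \<alpha> \<mu>) (complex_of_real r2) \<and>
    saddle_pt (V \<alpha> \<mu>) (complex_of_real r1) \<and>
    minimum_pt (V \<alpha> \<mu>) (complex_of_real r3 * cis (pi / 2))"
proof -
  have a0: "0 < \<alpha>" using assms by simp
  obtain r2 where r2: "0 < r2" "r2 < 1" "F \<alpha> \<mu> r2 = 0" using F_root_01[OF a0 assms(3)] by blast
  obtain r1 where r1: "1 < r1" "F \<alpha> \<mu> r1 = 0" using F_root_1inf[OF a0 assms(3)] by blast
  obtain r3 where r3: "1 < r3" "P \<alpha> \<mu> r3 = 0" using P_root[OF a0 assms(3)] by blast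
  note S = crit_set[OF assms(1) assms(3) r2 r1 r3]
  have c2: "critical_point (V \<alpha> \<mu>) (complex_of_real r2)" using S by blast
  have c1: "critical_point (V \<alpha> \<mu>) (complex_of_real r1)" using S by blast
  have c3: "critical_point (V \<alpha> \<mu>) (complex_of_real r3 * cis (pi / 2))" using S by blast
  have s2: "saddle_pt (V \<alpha> \<mu>) (complex_of_real r2)"
    using saddle_real[OF assms(1) assms(3) r2(1) _ r2(3) c2] r2 by simp
  have s1: "saddle_pt (V \<alpha> \<mu>) (complex_of_real r1)"
    using saddle_real[OF assms(1) assms(3) _ _ r1(2) c1] r1 by simp
  have m3: "minimum_pt (V \<alpha> \<mu>) (complex_of_real r3 * cis (pi / 2))"
    using min_r3[OF assms(1) assms(3) r2 r1 r3] c3 by (simp add: minimum_pt_def)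
  show ?thesis using r1 r2 r3 S s1 s2 m3 by blast
qed

end
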